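(* For every $f\in\mathcal G$, the series $\sum_{n=1}^\infty f(nx)$ converges absolutely for almost every $x>0$, so $Pf(x)=\sum_{n=1}^\infty f(nx)-\frac1x\int_0^\infty f(t)\,dt$ is well defined a.e. on $(0,\infty)$, and $Pf$ is locally integrable on $(0,\infty)$.
   Context: A good kernel is a continuously differentiable function $f:[0,\infty)\to\mathbb C$ with $f(x)\to0$ as $x\to\infty$, $f\in L_1(0,\infty)$, and $\int_0^\infty t|f'(t)|\,dt<\infty$; $\mathcal G$ denotes the class of good kernels. *)

theory Defs
  imports "HOL-Analysis.Analysis"
begin

definition good_kernel :: "(real \<Rightarrow> complex) \<Rightarrow> bool" where
  "good_kernel f \<longleftrightarrow>
     (\<exists>f'. (\<forall>t\<ge>0. (f has_vector_derivative f' t) (at t within {0..}))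
          \<and> continuous_on {0..} f'
          \<and> set_integrable lborel {0<..} (\<lambda>t. t * norm (f' t)))
     \<and> (f \<longlongrightarrow> 0) at_top
     \<and> set_integrable lborel {0<..} f"

definition Pf :: "(real \<Rightarrow> complex) \<Rightarrow> real \<Rightarrow> complex" where
  "Pf f x = (\<Sum>n. f (real (Suc n) * x))
            - complex_of_real (1 / x) * (LINT t:{0<..}|lborel. f t)"

end

theory Submission imports Defs begin
lemma card_bound:
  fixes S :: "nat set"
  assumes "finite S" "\<And>n. n \<in> S \<Longrightarrow> \<alpha> \<le> real n \<and> real n \<le> \<beta>" "S \<noteq> {}"
  shows "real (card S) \<le> \<beta> - \<alpha> + 1"
proof -
  have sub: "S \<subseteq> {Min S..Max S}" using assms(1) by auto
  have "card S \<le> card {Min S..Max S}" using card_mono[OF _ sub] by simp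
  also have "\<dots> = Max S + 1 - Min S" by simp
  finally have c0: "card S \<le> Max S + 1 - Min S" .
  have mm: "Min S \<le> Max S + 1"
    using Min_le[OF assms(1) Max_in[OF assms(1,3)]] by simp
  have c: "real (card S) \<le> real (Max S) + 1 - real (Min S)"
    using c0 mm by (metis of_nat_le_iff of_nat_diff of_nat_add of_nat_1)
  have "\<alpha> \<le> real (Min S)" using assms(2)[OF Min_in[OF assms(1,3)]] by simp
  moreover have "real (Max S) \<le> \<beta>" using assms(2)[OF Max_in[OF assms(1,3)]] by simp
  ultimately show ?thesis using c by linarith
qed

lemma weight_bound_real:
  fixes a b t :: real
  assumes ab: "0 < a" "a \<le> b"
  defines "S \<equiv> {n::nat. real (Suc n) * a \<le> t \<and> t \<le> real (Suc n) * b}"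
  shows "finite S" "(\<Sum>n\<in>S. 1 / real (Suc n)) \<le> 2 * b / a"
proof -
  have "S \<subseteq> {..nat \<lceil>t / a\<rceil>}"
  proof
    fix n assume "n \<in> S"
    then have "real (Suc n) * a \<le> t" by (simp add: S_def)
    then have "real n \<le> t / a" using ab by (simp add: field_simps)
    then show "n \<in> {..nat \<lceil>t / a\<rceil>}" by (simp add: le_nat_iff ceiling_le_iff) linarith
  qed
  then show fin: "finite S" using finite_subset by blast
  show "(\<Sum>n\<in>S. 1 / real (Suc n)) \<le> 2 * b / a"
  proof (cases "S = {}")
    case True then show ?thesis using ab by simp
  next
    case False
    then obtain n0 where "n0 \<in> S" by blast
    then have "real (Suc n0) * a \<le> t" by (simp add: S_def)
    moreover have "a \<le> real (Suc n0) * a" using ab by simp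
    ultimately have "a \<le> t" by linarith
    then have tpos: "t > 0" using ab by simp
    have bpos: "b > 0" using ab by simp
    have trm: "1 / real (Suc n) \<le> b / t" if "n \<in> S" for n
    proof -
      have "t \<le> real (Suc n) * b" using that by (simp add: S_def)
      then show ?thesis using tpos bpos by (simp add: field_simps)
    qed
    have "(\<Sum>n\<in>S. 1 / real (Suc n)) \<le> (\<Sum>n\<in>S. b / t)" by (rule sum_mono) (use trm in auto)
    also have "\<dots> = real (card S) * (b / t)" by simp
    also have "\<dots> \<le> (t / a - t / b + 1) * (b / t)"
    proof (rule mult_right_mono)
      have "real (card S) \<le> (t / a - 1) - (t / b - 1) + 1"
      proof (rule card_bound[OF fin _ False])
        fix n assume "n \<in> S"
        then have "real (Suc n) * a \<le> t" "t \<le> real (Suc n) * b" by (auto simp: S_def)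
        then show "t / b - 1 \<le> real n \<and> real n \<le> t / a - 1"
          using ab bpos by (auto simp: field_simps)
      qed
      then show "real (card S) \<le> t / a - t / b + 1" by simp
    qed (use tpos bpos in simp)
    also have "\<dots> = b / a - 1 + b / t" using tpos bpos ab by (simp add: field_simps)
    also have "\<dots> \<le> 2 * b / a"
    proof -
      have "b / t \<le> b / a" using \<open>a \<le> t\<close> ab bpos by (simp add: frac_le)
      then show ?thesis by simp
    qed
    finally show ?thesis .
  qed
qed

lemma weight_bound:
  fixes a b t :: real
  assumes ab: "0 < a" "a \<le> b"
  shows "(\<Sum>n. ennreal (indicator {real (Suc n) * a..real (Suc n) * b} t / real (Suc n))) \<le> ennreal (2 * b / a)"
proof -
  define S where "S = {n::nat. real (Suc n) * a \<le> t \<and> t \<le> real (Suc n) * b}"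
  have fin: "finite S" and bd: "(\<Sum>n\<in>S. 1 / real (Suc n)) \<le> 2 * b / a"
    using weight_bound_real[OF ab, of t] by (auto simp: S_def)
  have "(\<Sum>n. ennreal (indicator {real (Suc n) * a..real (Suc n) * b} t / real (Suc n)))
      = (\<Sum>n\<in>S. ennreal (indicator {real (Suc n) * a..real (Suc n) * b} t / real (Suc n)))"
    by (rule suminf_finite[OF fin]) (auto simp: S_def indicator_def)
  also have "\<dots> = (\<Sum>n\<in>S. ennreal (1 / real (Suc n)))"
    by (rule sum.cong) (auto simp: S_def indicator_def)
  also have "\<dots> = ennreal (\<Sum>n\<in>S. 1 / real (Suc n))" by simp
  also have "\<dots> \<le> ennreal (2 * b / a)" using bd by (rule ennreal_leI)
  finally show ?thesis .
qed

lemma int_bound: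
  fixes h :: "real \<Rightarrow> complex" and a b :: real
  assumes hm[measurable]: "h \<in> borel_measurable borel" and ab: "0 < a" "a \<le> b"
  shows "(\<integral>\<^sup>+x. ennreal (indicator {a..b} x) * (\<Sum>n. ennreal (norm (h (real (Suc n) * x)))) \<partial>lborel)
         \<le> ennreal (2 * b / a) * (\<integral>\<^sup>+t. ennreal (norm (h t)) \<partial>lborel)"
proof -
  have eachn: "(\<integral>\<^sup>+x. ennreal (indicator {a..b} x * norm (h (real (Suc n) * x))) \<partial>lborel)
      = (\<integral>\<^sup>+t. ennreal (indicator {real (Suc n) * a..real (Suc n) * b} t / real (Suc n)) * ennreal (norm (h t)) \<partial>lborel)"
    for n
  proof -
    define c where "c = real (Suc n)"
    have cpos: "c > 0" by (simp add: c_def)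
    define F where "F t = ennreal (indicator {c * a..c * b} t * norm (h t))" for t
    have Fm[measurable]: "F \<in> borel_measurable borel" unfolding F_def by measurable
    have "(\<integral>\<^sup>+t. F t \<partial>lborel) = ennreal \<bar>c\<bar> * (\<integral>\<^sup>+x. F (0 + c * x) \<partial>lborel)"
      by (rule nn_integral_real_affine[OF Fm]) (use cpos in simp)
    also have "(\<lambda>x. F (0 + c * x)) = (\<lambda>x. ennreal (indicator {a..b} x * norm (h (c * x))))"
    proof
      fix x
      have "indicator {c * a..c * b} (c * x) = (indicator {a..b} x :: real)"
        using cpos by (simp add: indicator_def)
      then show "F (0 + c * x) = ennreal (indicator {a..b} x * norm (h (c * x)))"
        by (simp add: F_def)
    qed
    finally have eq: "(\<integral>\<^sup>+t. F t \<partial>lborel) = ennreal c * (\<integral>\<^sup>+x. ennreal (indicator {a..b} x * norm (h (c * x))) \<partial>lborel)"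
      using cpos by simp
    have "(\<integral>\<^sup>+t. ennreal (indicator {c * a..c * b} t / c) * ennreal (norm (h t)) \<partial>lborel)
        = (\<integral>\<^sup>+t. ennreal (1 / c) * F t \<partial>lborel)"
    proof (rule nn_integral_cong)
      fix t
      have "ennreal (indicator {c * a..c * b} t / c) * ennreal (norm (h t))
          = ennreal (indicator {c * a..c * b} t / c * norm (h t))"
        by (rule ennreal_mult[symmetric]) (use cpos in auto)
      also have "indicator {c * a..c * b} t / c * norm (h t) = 1 / c * (indicator {c * a..c * b} t * norm (h t))"
        by simp
      also have "ennreal \<dots> = ennreal (1 / c) * F t"
        unfolding F_def by (rule ennreal_mult) (use cpos in auto)
      finally show "ennreal (indicator {c * a..c * b} t / c) * ennreal (norm (h t)) = ennreal (1 / c) * F t" .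
    qed
    also have "\<dots> = ennreal (1 / c) * (\<integral>\<^sup>+t. F t \<partial>lborel)"
      by (rule nn_integral_cmult) simp
    also have "\<dots> = (ennreal (1 / c) * ennreal c) * (\<integral>\<^sup>+x. ennreal (indicator {a..b} x * norm (h (c * x))) \<partial>lborel)"
      by (simp add: eq mult.assoc)
    also have "ennreal (1 / c) * ennreal c = 1"
    proof -
      have "ennreal (1 / c) * ennreal c = ennreal (1 / c * c)"
        by (rule ennreal_mult[symmetric]) (use cpos in auto)
      then show ?thesis using cpos by simp
    qed
    finally show ?thesis by (simp add: c_def)
  qed
  have "(\<integral>\<^sup>+x. ennreal (indicator {a..b} x) * (\<Sum>n. ennreal (norm (h (real (Suc n) * x)))) \<partial>lborel)
      = (\<integral>\<^sup>+x. (\<Sum>n. ennreal (indicator {a..b} x * norm (h (real (Suc n) * x)))) \<partial>lborel)"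
  proof (rule nn_integral_cong)
    fix x
    have pe: "ennreal (indicator {a..b} x) * ennreal (norm (h (real (Suc n) * x)))
        = ennreal (indicator {a..b} x * norm (h (real (Suc n) * x)))" for n
      by (rule ennreal_mult[symmetric]) auto
    show "ennreal (indicator {a..b} x) * (\<Sum>n. ennreal (norm (h (real (Suc n) * x))))
        = (\<Sum>n. ennreal (indicator {a..b} x * norm (h (real (Suc n) * x))))"
      by (simp only: ennreal_suminf_cmult[symmetric] pe)
  qed
  also have "\<dots> = (\<Sum>n. (\<integral>\<^sup>+x. ennreal (indicator {a..b} x * norm (h (real (Suc n) * x))) \<partial>lborel))"
    by (rule nn_integral_suminf) measurable
  also have "\<dots> = (\<Sum>n. (\<integral>\<^sup>+t. ennreal (indicator {real (Suc n) * a..real (Suc n) * b} t / real (Suc n)) * ennreal (norm (h t)) \<partial>lborel))"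
    by (intro suminf_cong eachn)
  also have "\<dots> = (\<integral>\<^sup>+t. (\<Sum>n. ennreal (indicator {real (Suc n) * a..real (Suc n) * b} t / real (Suc n)) * ennreal (norm (h t))) \<partial>lborel)"
    by (rule nn_integral_suminf[symmetric]) measurable
  also have "\<dots> = (\<integral>\<^sup>+t. (\<Sum>n. ennreal (indicator {real (Suc n) * a..real (Suc n) * b} t / real (Suc n))) * ennreal (norm (h t)) \<partial>lborel)"
    by (simp only: ennreal_suminf_multc)
  also have "\<dots> \<le> (\<integral>\<^sup>+t. ennreal (2 * b / a) * ennreal (norm (h t)) \<partial>lborel)"
    by (rule nn_integral_mono) (rule mult_right_mono[OF weight_bound[OF ab]], simp)
  also have "\<dots> = ennreal (2 * b / a) * (\<integral>\<^sup>+t. ennreal (norm (h t)) \<partial>lborel)"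
    by (rule nn_integral_cmult) simp
  finally show ?thesis .
qed

lemma norm_suminf_le_G:
  fixes g :: "nat \<Rightarrow> complex"
  shows "ennreal (norm (suminf g)) \<le> (\<Sum>n. ennreal (norm (g n)))"
proof (cases "(\<Sum>n. ennreal (norm (g n))) = top")
  case True then show ?thesis by simp
next
  case False
  then have s: "summable (\<lambda>n. norm (g n))" by (intro summable_suminf_not_top) auto
  then have "(\<Sum>n. ennreal (norm (g n))) = ennreal (\<Sum>n. norm (g n))" by (intro suminf_ennreal2) auto
  moreover have "norm (suminf g) \<le> (\<Sum>n. norm (g n))" using summable_norm[OF s] .
  ultimately show ?thesis by (simp add: ennreal_leI)
qed

theorem mainTheorem6:
  fixes f :: "real \<Rightarrow> complex"
  assumes "good_kernel f"
  shows "(AE x in lborel. x > 0 \<longrightarrow> summable (\<lambda>n. norm (f (real (Suc n) * x))))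
         \<and> (\<forall>K. compact K \<and> K \<subseteq> {0<..} \<longrightarrow> set_integrable lborel K (Pf f))"
proof -
  have fint: "set_integrable lborel {0<..} f" using assms by (simp add: good_kernel_def)
  define h where "h = (\<lambda>t. indicator {0<..} t *\<^sub>R f t)"
  have hint: "integrable lborel h" using fint by (simp add: set_integrable_def h_def)
  have hm[measurable]: "h \<in> borel_measurable borel"
    using borel_measurable_integrable[OF hint] by simp
  have hfin: "(\<integral>\<^sup>+t. ennreal (norm (h t)) \<partial>lborel) < \<infinity>"
    using hint by (simp add: integrable_iff_bounded)
  have hf: "h (real (Suc n) * x) = f (real (Suc n) * x)" if "x > 0" for x n
    using that by (simp add: h_def)
  define G where "G x = (\<Sum>n. ennreal (norm (h (real (Suc n) * x))))" for x
  have Gm[measurable]: "G \<in> borel_measurable borel" unfolding G_def by measurable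
  have Gint: "(\<integral>\<^sup>+x. ennreal (indicator {a..b} x) * G x \<partial>lborel) < \<infinity>"
    if "0 < a" "a \<le> b" for a b
  proof -
    have "(\<integral>\<^sup>+x. ennreal (indicator {a..b} x) * G x \<partial>lborel)
         \<le> ennreal (2 * b / a) * (\<integral>\<^sup>+t. ennreal (norm (h t)) \<partial>lborel)"
      unfolding G_def by (rule int_bound[OF hm that])
    also have "\<dots> < \<infinity>" using hfin by (simp add: ennreal_mult_less_top)
    finally show ?thesis .
  qed
  have part1: "AE x in lborel. x > 0 \<longrightarrow> summable (\<lambda>n. norm (f (real (Suc n) * x)))"
  proof -
    have Ak: "AE x in lborel. x \<in> {1 / real (Suc k)..real (Suc k)} \<longrightarrow> G x \<noteq> \<infinity>" for k
    proof -
      have "AE x in lborel. ennreal (indicator {1 / real (Suc k)..real (Suc k)} x) * G x \<noteq> \<infinity>"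
        by (rule nn_integral_PInf_AE) (use Gint[of "1 / real (Suc k)" "real (Suc k)"] in \<open>auto simp: field_simps\<close>)
      then show ?thesis by (rule eventually_mono) (auto simp: indicator_def)
    qed
    have "AE x in lborel. \<forall>k. x \<in> {1 / real (Suc k)..real (Suc k)} \<longrightarrow> G x \<noteq> \<infinity>"
      by (rule AE_all_countable[THEN iffD2], rule allI, rule Ak)
    then show ?thesis
    proof (rule eventually_mono, intro impI)
      fix x :: real
      assume H: "\<forall>k. x \<in> {1 / real (Suc k)..real (Suc k)} \<longrightarrow> G x \<noteq> \<infinity>" and xp: "x > 0"
      define k where "k = nat \<lceil>max x (1 / x)\<rceil>"
      have k1: "max x (1 / x) \<le> real k" unfolding k_def by linarith
      have "x \<le> real (Suc k)" using k1 by simp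
      moreover have "1 / real (Suc k) \<le> x"
      proof -
        have "1 / x \<le> real (Suc k)" using k1 by simp
        then show ?thesis using xp by (simp add: field_simps)
      qed
      ultimately have "G x \<noteq> \<infinity>" using H by auto
      then have "summable (\<lambda>n. norm (h (real (Suc n) * x)))"
        unfolding G_def by (intro summable_suminf_not_top) auto
      then show "summable (\<lambda>n. norm (f (real (Suc n) * x)))" using hf[OF xp] by simp
    qed
  qed
  have part2: "set_integrable lborel K (Pf f)" if K: "compact K" "K \<subseteq> {0<..}" for K
  proof (cases "K = {}")
    case True then show ?thesis by (simp add: set_integrable_def)
  next
    case False
    obtain a where a: "a \<in> K" "\<And>y. y \<in> K \<Longrightarrow> a \<le> y"
      using compact_attains_inf[OF K(1) False] by blast
    obtain b where b: "b \<in> K" "\<And>y. y \<in> K \<Longrightarrow> y \<le> b"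
      using compact_attains_sup[OF K(1) False] by blast
    have apos: "a > 0" using a K by auto
    have ab: "a \<le> b" using a b by auto
    have Kab: "K \<subseteq> {a..b}" using a b by auto
    have Kb[measurable]: "K \<in> sets borel" using K(1) by (simp add: compact_imp_closed borel_closed)
    define C where "C = (LINT t:{0<..}|lborel. f t)"
    define F where "F x = indicator K x *\<^sub>R ((\<Sum>n. h (real (Suc n) * x)) - complex_of_real (1 / x) * C)" for x
    have eqF: "(\<lambda>x. indicator K x *\<^sub>R Pf f x) = F"
    proof
      fix x show "indicator K x *\<^sub>R Pf f x = F x"
      proof (cases "x \<in> K")
        case True
        then have "x > 0" using K by auto
        then have "(\<Sum>n. h (real (Suc n) * x)) = (\<Sum>n. f (real (Suc n) * x))"
          using hf by presburger
        then show ?thesis using True by (simp add: F_def Pf_def C_def)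
      qed (simp add: F_def)
    qed
    have Fm: "F \<in> borel_measurable lborel" unfolding F_def by measurable
    have bound: "ennreal (norm (F x)) \<le> ennreal (indicator {a..b} x) * G x + ennreal (norm C / a) * indicator {a..b} x" for x
    proof (cases "x \<in> K")
      case False then show ?thesis by (simp add: F_def)
    next
      case True
      then have xab: "x \<in> {a..b}" using Kab by auto
      have xa: "a \<le> x" using xab by simp
      have "norm (F x) = norm ((\<Sum>n. h (real (Suc n) * x)) - complex_of_real (1 / x) * C)"
        using True by (simp add: F_def)
      also have "\<dots> \<le> norm (\<Sum>n. h (real (Suc n) * x)) + norm (complex_of_real (1 / x) * C)"
        by (rule norm_triangle_ineq4)
      also have "norm (complex_of_real (1 / x) * C) \<le> norm C / a"
      proof -
        have "norm (complex_of_real (1 / x) * C) = norm C / x" using apos xa by (simp add: norm_mult norm_divide)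
        also have "\<dots> \<le> norm C / a" using apos xa by (simp add: frac_le)
        finally show ?thesis .
      qed
      finally have r: "norm (F x) \<le> norm (\<Sum>n. h (real (Suc n) * x)) + norm C / a" by simp
      have "ennreal (norm (F x)) \<le> ennreal (norm (\<Sum>n. h (real (Suc n) * x))) + ennreal (norm C / a)"
      proof -
        have "ennreal (norm (F x)) \<le> ennreal (norm (\<Sum>n. h (real (Suc n) * x)) + norm C / a)"
          using r by (rule ennreal_leI)
        also have "\<dots> = ennreal (norm (\<Sum>n. h (real (Suc n) * x))) + ennreal (norm C / a)"
          using apos by (intro ennreal_plus) auto
        finally show ?thesis .
      qed
      also have "\<dots> \<le> G x + ennreal (norm C / a)"
        unfolding G_def by (intro add_right_mono norm_suminf_le_G)
      finally show ?thesis using xab by simp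
    qed
    have "(\<integral>\<^sup>+x. ennreal (norm (F x)) \<partial>lborel)
        \<le> (\<integral>\<^sup>+x. ennreal (indicator {a..b} x) * G x + ennreal (norm C / a) * indicator {a..b} x \<partial>lborel)"
      by (rule nn_integral_mono) (rule bound)
    also have "\<dots> = (\<integral>\<^sup>+x. ennreal (indicator {a..b} x) * G x \<partial>lborel) + (\<integral>\<^sup>+x. ennreal (norm C / a) * indicator {a..b} x \<partial>lborel)"
      by (rule nn_integral_add) auto
    also have "(\<integral>\<^sup>+x. ennreal (norm C / a) * indicator {a..b} x \<partial>lborel) = ennreal (norm C / a) * ennreal (b - a)"
      using ab by (simp add: nn_integral_cmult_indicator)
    also have "(\<integral>\<^sup>+x. ennreal (indicator {a..b} x) * G x \<partial>lborel) + ennreal (norm C / a) * ennreal (b - a) < \<infinity>"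
      using Gint[OF apos ab] by (simp add: ennreal_mult_less_top)
    finally have "(\<integral>\<^sup>+x. ennreal (norm (F x)) \<partial>lborel) < \<infinity>" .
    then have "integrable lborel F" by (rule integrableI_bounded[OF Fm])
    then show ?thesis unfolding set_integrable_def eqF .
  qed
  show ?thesis using part1 part2 by blast
qed

end
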